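(* Let $G$ be a locally compact abelian group and let $\mu\in M(G)$ be a real-valued (signed) measure that is antisymmetric, i.e. $\mu(-A)=-\mu(A)$ for every Borel set $A\subset G$. Let $\mu=\mu^+-\mu^-$ be its Jordan decomposition and let $A^+,A^-$ be a Hahn decomposition for $\mu$. Set $V=A^+\cap(-A^-)$. Then $V\cap(-V)=\emptyset$; for every Borel set $E\subset G$, $$\mu^+(E)=\mu(E\cap A^+)=\mu(E\cap V),\qquad \mu^-(E)=-\mu(E\cap A^-)=-\mu(E\cap(-V));$$ and $$\mu^+(V)=\|\mu^+\|=\|\mu^-\|=\mu^-(-V)=\tfrac12\|\mu\|.$$
   Context: $M(G)$ is the space of bounded regular complex Borel measures on $G$ with total variation norm $\|\cdot\|$. For a Borel set $A$, $-A=\{x\in G:-x\in A\}$. The Jordan decomposition of a signed measure $\mu$ is the unique representation $\mu=\mu^+-\mu^-$ with $\mu^+,\mu^-$ mutually singular nonnegative measures in $M(G)$; a Hahn decomposition is a pair of disjoint Borel sets $A^+,A^-$ with $A^+\cup A^-=G$ such that $\mu^+(A^-)=\mu^-(A^+)=0$, equivalently $A^+$ is a positive set and $A^-$ a negative set for $\mu$, and then $\mu^+(E)=\mu(E\cap A^+)$, $\mu^-(E)=-\mu(E\cap A^-)$. *)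

theory Defs
  imports "HOL-Analysis.Analysis"
begin

definition signed_borel_measure :: "('a::topological_space set \<Rightarrow> real) \<Rightarrow> bool" where
  "signed_borel_measure mu \<longleftrightarrow>
     (\<forall>F::nat \<Rightarrow> 'a set. range F \<subseteq> sets borel \<longrightarrow> disjoint_family F \<longrightarrow>
        (\<lambda>n. mu (F n)) sums mu (\<Union>n. F n))"

definition total_variation :: "('a::topological_space set \<Rightarrow> real) \<Rightarrow> 'a set \<Rightarrow> real" where
  "total_variation mu E =
     Sup {(\<Sum>A\<in>P. \<bar>mu A\<bar>) | P. finite P \<and> P \<subseteq> sets borel \<and> (\<forall>A\<in>P. A \<subseteq> E) \<and> disjoint P}"

definition tv_norm :: "('a::topological_space set \<Rightarrow> real) \<Rightarrow> real" where
  "tv_norm mu = total_variation mu UNIV"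

definition regular_signed :: "('a::topological_space set \<Rightarrow> real) \<Rightarrow> bool" where
  "regular_signed mu \<longleftrightarrow>
     (\<forall>E\<in>sets borel.
        total_variation mu E = (SUP K\<in>{K. compact K \<and> K \<subseteq> E}. total_variation mu K) \<and>
        total_variation mu E = (INF U\<in>{U. open U \<and> E \<subseteq> U}. total_variation mu U))"

definition real_M :: "('a::topological_space set \<Rightarrow> real) \<Rightarrow> bool" where
  "real_M mu \<longleftrightarrow> signed_borel_measure mu \<and> regular_signed mu \<and>
     bdd_above {(\<Sum>A\<in>P. \<bar>mu A\<bar>) | P. finite P \<and> P \<subseteq> sets borel \<and> disjoint P}"

definition jordan_decomp :: "('a::topological_space set \<Rightarrow> real) \<Rightarrow> 'a measure \<Rightarrow> 'a measure \<Rightarrow> bool" where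
  "jordan_decomp mu mup mum \<longleftrightarrow>
     sets mup = sets borel \<and> sets mum = sets borel \<and>
     finite_measure mup \<and> finite_measure mum \<and>
     (\<exists>S\<in>sets borel. emeasure mup S = 0 \<and> emeasure mum (- S) = 0) \<and>
     (\<forall>E\<in>sets borel. mu E = measure mup E - measure mum E)"

definition hahn_decomp :: "'a::topological_space measure \<Rightarrow> 'a measure \<Rightarrow> 'a set \<Rightarrow> 'a set \<Rightarrow> bool" where
  "hahn_decomp mup mum Ap Am \<longleftrightarrow>
     Ap \<in> sets borel \<and> Am \<in> sets borel \<and> Ap \<inter> Am = {} \<and> Ap \<union> Am = UNIV \<and>
     measure mup Am = 0 \<and> measure mum Ap = 0"

end

theory Submission
  imports Defs
begin

lemma uminus_img_borel:
  fixes A :: "'a::topological_ab_group_add set"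
  assumes "A \<in> sets borel" shows "uminus ` A \<in> sets borel"
proof -
  have e: "uminus ` A = uminus -` A \<inter> space borel"
    by (auto simp: image_iff) (metis minus_minus)
  have "(uminus :: 'a \<Rightarrow> 'a) \<in> borel_measurable borel"
    by (intro borel_measurable_continuous_onI continuous_intros)
  then show ?thesis unfolding e using assms by (rule measurable_sets)
qed

lemma sum_le_univ:
  assumes fm: "finite_measure M" and s: "sets M = sets borel"
    and P: "finite P" "P \<subseteq> sets borel" "disjoint P"
  shows "(\<Sum>A\<in>P. measure M A) \<le> measure M UNIV"
proof -
  interpret finite_measure M by (rule fm)
  have "(\<Sum>A\<in>P. measure M A) = measure M (\<Union>A\<in>P. A)"
    using P s by (intro finite_measure_finite_Union[of P "\<lambda>A. A", symmetric])
      (auto simp: disjoint_family_on_def disjoint_def)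
  also have "\<dots> \<le> measure M (space M)"
    using P s by (intro finite_measure_mono) (auto dest: sets.sets_into_space)
  also have "space M = UNIV" using s by (metis space_borel sets_eq_imp_space_eq)
  finally show ?thesis .
qed

lemma tv_pos:
  assumes fm: "finite_measure M" and s: "sets M = sets borel"
  shows "tv_norm (measure M) = measure M UNIV"
  unfolding tv_norm_def total_variation_def
proof (rule cSup_eq_maximum)
  show "measure M UNIV \<in> {\<Sum>A\<in>P. \<bar>measure M A\<bar> |P. finite P \<and> P \<subseteq> sets borel \<and> (\<forall>A\<in>P. A \<subseteq> UNIV) \<and> disjoint P}"
    by (rule CollectI, rule exI[of _ "{UNIV}"]) (auto simp: disjoint_def)
  fix x assume "x \<in> {\<Sum>A\<in>P. \<bar>measure M A\<bar> |P. finite P \<and> P \<subseteq> sets borel \<and> (\<forall>A\<in>P. A \<subseteq> UNIV) \<and> disjoint P}"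
  then obtain P where P: "finite P" "P \<subseteq> sets borel" "disjoint P" and x: "x = (\<Sum>A\<in>P. \<bar>measure M A\<bar>)" by auto
  then show "x \<le> measure M UNIV" using sum_le_univ[OF fm s P] by simp
qed

theorem lemma1:
  fixes mu :: "'a::{topological_ab_group_add, t2_space} set \<Rightarrow> real"
    and mup mum :: "'a measure" and Ap Am V :: "'a set"
  assumes lc: "locally_compact_space (euclidean :: 'a topology)"
    and M: "real_M mu"
    and antisym: "\<forall>A\<in>sets borel. mu (uminus ` A) = - mu A"
    and J: "jordan_decomp mu mup mum"
    and H: "hahn_decomp mup mum Ap Am"
    and V: "V = Ap \<inter> uminus ` Am"
  shows "V \<inter> uminus ` V = {}
    \<and> (\<forall>E\<in>sets borel.
          measure mup E = mu (E \<inter> Ap) \<and> mu (E \<inter> Ap) = mu (E \<inter> V) \<and>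
          measure mum E = - mu (E \<inter> Am) \<and> - mu (E \<inter> Am) = - mu (E \<inter> uminus ` V))
    \<and> measure mup V = tv_norm (measure mup)
    \<and> tv_norm (measure mup) = tv_norm (measure mum)
    \<and> tv_norm (measure mum) = measure mum (uminus ` V)
    \<and> measure mum (uminus ` V) = tv_norm mu / 2"
proof -
  from J have sp: "sets mup = sets borel" and sm: "sets mum = sets borel"
    and fp: "finite_measure mup" and fmm: "finite_measure mum"
    and muE: "\<And>E. E \<in> sets borel \<Longrightarrow> mu E = measure mup E - measure mum E"
    unfolding jordan_decomp_def by auto
  from H have Ap: "Ap \<in> sets borel" and Am: "Am \<in> sets borel" and dj: "Ap \<inter> Am = {}"
    and un: "Ap \<union> Am = UNIV" and p0: "measure mup Am = 0" and m0: "measure mum Ap = 0"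
    unfolding hahn_decomp_def by auto
  interpret P: finite_measure mup by (rule fp)
  interpret N: finite_measure mum by (rule fmm)
  have Vb: "V \<in> sets borel" using V Ap Am uminus_img_borel by blast
  have nVb: "uminus ` V \<in> sets borel" using Vb uminus_img_borel by blast
  have mp0: "\<And>E. E \<subseteq> Am \<Longrightarrow> E \<in> sets borel \<Longrightarrow> measure mup E = 0"
    using p0 Am sp by (metis P.finite_measure_mono measure_nonneg order_antisym)
  have mm0: "\<And>E. E \<subseteq> Ap \<Longrightarrow> E \<in> sets borel \<Longrightarrow> measure mum E = 0"
    using m0 Ap sm by (metis N.finite_measure_mono measure_nonneg order_antisym)
  have posAp: "\<And>E. E \<subseteq> Ap \<Longrightarrow> E \<in> sets borel \<Longrightarrow> mu E \<ge> 0"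
    using muE mm0 by simp
  have negAm: "\<And>E. E \<subseteq> Am \<Longrightarrow> E \<in> sets borel \<Longrightarrow> mu E \<le> 0"
    using muE mp0 by simp
  have splitp: "\<And>E. E \<in> sets borel \<Longrightarrow> measure mup E = measure mup (E \<inter> Ap) + measure mup (E \<inter> Am)"
  proof -
    fix E :: "'a set" assume E: "E \<in> sets borel"
    have "E = (E \<inter> Ap) \<union> (E \<inter> Am)" using un by auto
    then have "measure mup E = measure mup ((E \<inter> Ap) \<union> (E \<inter> Am))" by simp
    also have "\<dots> = measure mup (E \<inter> Ap) + measure mup (E \<inter> Am)"
      using E Ap Am sp dj by (intro P.finite_measure_Union) auto
    finally show "measure mup E = measure mup (E \<inter> Ap) + measure mup (E \<inter> Am)" .
  qed
  have splitm: "\<And>E. E \<in> sets borel \<Longrightarrow> measure mum E = measure mum (E \<inter> Ap) + measure mum (E \<inter> Am)"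
  proof -
    fix E :: "'a set" assume E: "E \<in> sets borel"
    have "E = (E \<inter> Ap) \<union> (E \<inter> Am)" using un by auto
    then have "measure mum E = measure mum ((E \<inter> Ap) \<union> (E \<inter> Am))" by simp
    also have "\<dots> = measure mum (E \<inter> Ap) + measure mum (E \<inter> Am)"
      using E Ap Am sm dj by (intro N.finite_measure_Union) auto
    finally show "measure mum E = measure mum (E \<inter> Ap) + measure mum (E \<inter> Am)" .
  qed
  have mupE: "\<And>E. E \<in> sets borel \<Longrightarrow> measure mup E = mu (E \<inter> Ap)"
  proof -
    fix E :: "'a set" assume E: "E \<in> sets borel"
    have "measure mup (E \<inter> Am) = 0" using E Am mp0 by blast
    moreover have "measure mum (E \<inter> Ap) = 0" using E Ap mm0 by blast
    ultimately show "measure mup E = mu (E \<inter> Ap)" using splitp[OF E] muE[of "E \<inter> Ap"] E Ap by auto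
  qed
  have mumE: "\<And>E. E \<in> sets borel \<Longrightarrow> measure mum E = - mu (E \<inter> Am)"
  proof -
    fix E :: "'a set" assume E: "E \<in> sets borel"
    have "measure mup (E \<inter> Am) = 0" using E Am mp0 by blast
    moreover have "measure mum (E \<inter> Ap) = 0" using E Ap mm0 by blast
    ultimately show "measure mum E = - mu (E \<inter> Am)" using splitm[OF E] muE[of "E \<inter> Am"] E Am by auto
  qed
  have add: "\<And>A B. A \<in> sets borel \<Longrightarrow> B \<in> sets borel \<Longrightarrow> A \<inter> B = {} \<Longrightarrow> mu (A \<union> B) = mu A + mu B"
  proof -
    fix A B :: "'a set" assume A: "A \<in> sets borel" and B: "B \<in> sets borel" and d: "A \<inter> B = {}"
    have "measure mup (A \<union> B) = measure mup A + measure mup B"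
      using A B d sp by (intro P.finite_measure_Union) auto
    moreover have "measure mum (A \<union> B) = measure mum A + measure mum B"
      using A B d sm by (intro N.finite_measure_Union) auto
    ultimately show "mu (A \<union> B) = mu A + mu B" using muE A B by auto
  qed
  have disj: "V \<inter> uminus ` V = {}"
  proof (rule ccontr)
    assume "V \<inter> uminus ` V \<noteq> {}"
    then obtain x where "x \<in> V" "x \<in> uminus ` V" by blast
    then obtain y where "y \<in> V" "x = - y" by blast
    then have "x \<in> Am" using V by auto
    with \<open>x \<in> V\<close> show False using V dj by auto
  qed
  have nAp: "uminus ` Ap \<in> sets borel" and nAm: "uminus ` Am \<in> sets borel"
    using Ap Am uminus_img_borel by blast+
  have c1: "\<And>E. E \<in> sets borel \<Longrightarrow> mu (E \<inter> Ap) = mu (E \<inter> V)"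
  proof -
    fix E :: "'a set" assume E: "E \<in> sets borel"
    define B where "B = E \<inter> Ap \<inter> uminus ` Ap"
    have Bb: "B \<in> sets borel" using E Ap nAp B_def by blast
    have "mu B \<ge> 0" by (rule posAp[OF _ Bb]) (auto simp: B_def)
    moreover have "uminus ` B \<subseteq> Ap" unfolding B_def by auto
    then have "mu (uminus ` B) \<ge> 0" using posAp Bb uminus_img_borel by blast
    ultimately have B0: "mu B = 0" using antisym Bb by force
    have eq: "E \<inter> Ap = (E \<inter> V) \<union> B"
      unfolding B_def V using un dj by (auto simp: image_iff) (metis Un_iff UNIV_I minus_minus un)
    have "mu (E \<inter> Ap) = mu (E \<inter> V) + mu B"
      unfolding eq using E Vb Bb by (intro add) (auto simp: B_def V image_iff, metis minus_minus IntI dj empty_iff)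
    then show "mu (E \<inter> Ap) = mu (E \<inter> V)" using B0 by simp
  qed
  have nVAm: "uminus ` V \<subseteq> Am" using V by auto
  have c2: "\<And>E. E \<in> sets borel \<Longrightarrow> mu (E \<inter> Am) = mu (E \<inter> uminus ` V)"
  proof -
    fix E :: "'a set" assume E: "E \<in> sets borel"
    define B where "B = E \<inter> Am \<inter> uminus ` Am"
    have Bb: "B \<in> sets borel" using E Am nAm B_def by blast
    have "mu B \<le> 0" by (rule negAm[OF _ Bb]) (auto simp: B_def)
    moreover have "uminus ` B \<subseteq> Am" unfolding B_def by auto
    then have "mu (uminus ` B) \<le> 0" using negAm Bb uminus_img_borel by blast
    ultimately have B0: "mu B = 0" using antisym Bb by force
    have hx: "x \<in> uminus ` V" if "x \<in> Am" "- x \<notin> Am" for x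
    proof -
      have "- x \<in> Ap" using that un by auto
      moreover have "- x \<in> uminus ` Am" using that by auto
      ultimately have "- x \<in> V" using V by auto
      then show ?thesis by (metis image_eqI minus_minus)
    qed
    have hy: "x \<in> uminus ` Am" if "x \<in> Am" "- x \<in> Am" for x
      using that by (metis image_eqI minus_minus)
    have eq: "E \<inter> Am = (E \<inter> uminus ` V) \<union> B"
      unfolding B_def using hx hy nVAm by blast
    have "mu (E \<inter> Am) = mu (E \<inter> uminus ` V) + mu B"
      unfolding eq using E nVb Bb by (intro add) (auto simp: B_def V image_iff, metis minus_minus IntI dj empty_iff)
    then show "mu (E \<inter> Am) = mu (E \<inter> uminus ` V)" using B0 by simp
  qed
  have tvp: "tv_norm (measure mup) = measure mup UNIV" by (rule tv_pos[OF fp sp])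
  have tvm: "tv_norm (measure mum) = measure mum UNIV" by (rule tv_pos[OF fmm sm])
  have VAp: "V \<subseteq> Ap" using V by auto
  have u1: "measure mup UNIV = mu V" using mupE[of UNIV] c1[of UNIV] by simp
  have u2: "measure mup V = mu V" using mupE[OF Vb] c1[OF Vb] VAp by (simp add: Int_absorb2)
  have u3: "measure mum UNIV = mu V" using mumE[of UNIV] c2[of UNIV] antisym Vb by simp
  have u4: "measure mum (uminus ` V) = mu V" using mumE[OF nVb] nVAm antisym Vb
    by (simp add: Int_absorb2)
  have tvmu: "tv_norm mu = measure mup UNIV + measure mum UNIV"
    unfolding tv_norm_def total_variation_def
  proof (rule cSup_eq_maximum)
    have "Ap \<noteq> Am" using dj un by auto
    then have "\<bar>mu Ap\<bar> + \<bar>mu Am\<bar> = (\<Sum>A\<in>{Ap, Am}. \<bar>mu A\<bar>)" by simp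
    moreover have "\<bar>mu Ap\<bar> + \<bar>mu Am\<bar> = measure mup UNIV + measure mum UNIV"
      using mupE[of UNIV] mumE[of UNIV] posAp[OF order_refl Ap] negAm[OF order_refl Am] by simp
    ultimately show "measure mup UNIV + measure mum UNIV \<in> {\<Sum>A\<in>P. \<bar>mu A\<bar> |P. finite P \<and> P \<subseteq> sets borel \<and> (\<forall>A\<in>P. A \<subseteq> UNIV) \<and> disjoint P}"
      using Ap Am dj by (intro CollectI exI[of _ "{Ap, Am}"]) (auto simp: disjoint_def)
  next
    fix x assume "x \<in> {\<Sum>A\<in>P. \<bar>mu A\<bar> |P. finite P \<and> P \<subseteq> sets borel \<and> (\<forall>A\<in>P. A \<subseteq> UNIV) \<and> disjoint P}"
    then obtain Q where Q: "finite Q" "Q \<subseteq> sets borel" "disjoint Q" and x: "x = (\<Sum>A\<in>Q. \<bar>mu A\<bar>)" by auto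
    have "x \<le> (\<Sum>A\<in>Q. measure mup A + measure mum A)"
      unfolding x using Q(2) muE by (intro sum_mono) (auto simp: abs_le_iff)
    also have "\<dots> = (\<Sum>A\<in>Q. measure mup A) + (\<Sum>A\<in>Q. measure mum A)" by (simp add: sum.distrib)
    also have "\<dots> \<le> measure mup UNIV + measure mum UNIV"
      using sum_le_univ[OF fp sp Q] sum_le_univ[OF fmm sm Q] by simp
    finally show "x \<le> measure mup UNIV + measure mum UNIV" .
  qed
  show ?thesis using disj mupE c1 mumE c2 tvp tvm u1 u2 u3 u4 tvmu by simp
qed

end
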